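(* Let $(X,T),(Y,S)$ be $1$-step shifts of finite type over a finite alphabet $\mathcal{A}$, let $F:\mathcal{A}^2\to\mathbb{R}$ and $f(x,y)=F(x(0),y(0))$, and suppose $(X,T)$ is transitive. Then there is a constant $D_X\in\mathbb{N}$, depending on $(X,T)$ but not on $f$, such that for all integers $a\le b$, all $(v_1,v_2)\in P_{a,b}$ and all $y_0\in Y$, $$\min_{x\in X}\mathbb{S}_{[a,b]}f(x,y_0)\le H_{a,b,v_1,v_2}(y_0)\le\Big[\min_{x\in X}\mathbb{S}_{[a,b]}f(x,y_0)\Big]+4D_X\|f\|,$$ where $\|f\|$ is the supremum norm.
   Context: $\mathcal{A}^{\mathbb{Z}}$ carries the product of discrete topologies and the left shift $(Tx)(j)=x(j+1)$. A shift is a nonempty compact $X\subseteq\mathcal{A}^{\mathbb{Z}}$ with $TX=X$; it is a $1$-step shift of finite type if there is $\mathcal{F}\subseteq\mathcal{A}^{\{0,1\}}$ with $X=\{x:(T^jx)|_{[0,1]}\notin\mathcal{F}\ \forall j\}$. A shift $X$ is transitive if there is $D\in\mathbb{N}$ such that for all $x_1,x_2\in X$ and integers $b_1,a_2$ with $a_2-b_1\ge D$ there is $x'\in X$ with $x'(j)=x_1(j)$ for $j\le b_1$ and $x'(j)=x_2(j)$ for $j\ge a_2$. $\mathbb{S}_{[a,b]}f(x,y)=\sum_{j=a}^bf(T^jx,S^jy)$. $P_{a,b}=\{(v_1,v_2)\in\mathcal{A}^2:\exists x\in X,x(a)=v_1,x(b)=v_2\}$ and $H_{a,b,v_1,v_2}(y)=\min\{\mathbb{S}_{[a,b]}f(x,y):x\in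 X,x(a)=v_1,x(b)=v_2\}$. *)

theory Defs
  imports "HOL-Analysis.Analysis"
begin

definition shiftT :: "(int \<Rightarrow> 'a) \<Rightarrow> (int \<Rightarrow> 'a)" where
  "shiftT x = (\<lambda>j. x (j + 1))"

definition shift_pow :: "int \<Rightarrow> (int \<Rightarrow> 'a) \<Rightarrow> (int \<Rightarrow> 'a)" where
  "shift_pow n x = (\<lambda>j. x (j + n))"

definition full_shift_topology :: "(int \<Rightarrow> 'a) topology" where
  "full_shift_topology = product_topology (\<lambda>_. discrete_topology UNIV) UNIV"

definition is_shift :: "(int \<Rightarrow> 'a::finite) set \<Rightarrow> bool" where
  "is_shift X \<longleftrightarrow> X \<noteq> {} \<and> compactin full_shift_topology X \<and> shiftT ` X = X"

text \<open>1-step shift of finite type: forbidden words of length 2 (elements of A^{0,1}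
  encoded as pairs (w(0), w(1))).\<close>
definition is_1step_sft :: "(int \<Rightarrow> 'a::finite) set \<Rightarrow> bool" where
  "is_1step_sft X \<longleftrightarrow> is_shift X \<and>
     (\<exists>Fb :: ('a \<times> 'a) set. X = {x. \<forall>j. (x j, x (j + 1)) \<notin> Fb})"

definition transitive_shift :: "(int \<Rightarrow> 'a::finite) set \<Rightarrow> bool" where
  "transitive_shift X \<longleftrightarrow> (\<exists>D::nat. \<forall>x1\<in>X. \<forall>x2\<in>X. \<forall>b1 a2 :: int. a2 - b1 \<ge> int D \<longrightarrow>
     (\<exists>x'\<in>X. (\<forall>j\<le>b1. x' j = x1 j) \<and> (\<forall>j\<ge>a2. x' j = x2 j)))"

definition birkhoff_sum ::
  "((int \<Rightarrow> 'a) \<Rightarrow> (int \<Rightarrow> 'b) \<Rightarrow> real) \<Rightarrow> int \<Rightarrow> int \<Rightarrow> (int \<Rightarrow> 'a) \<Rightarrow> (int \<Rightarrow> 'b) \<Rightarrow> real" where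
  "birkhoff_sum f a b x y = (\<Sum>j\<in>{a..b}. f (shift_pow j x) (shift_pow j y))"

definition Pset :: "(int \<Rightarrow> 'a) set \<Rightarrow> int \<Rightarrow> int \<Rightarrow> ('a \<times> 'a) set" where
  "Pset X a b = {(v1, v2). \<exists>x\<in>X. x a = v1 \<and> x b = v2}"

definition Hfun ::
  "(int \<Rightarrow> 'a) set \<Rightarrow> ((int \<Rightarrow> 'a) \<Rightarrow> (int \<Rightarrow> 'b) \<Rightarrow> real) \<Rightarrow> int \<Rightarrow> int \<Rightarrow> 'a \<Rightarrow> 'a \<Rightarrow> (int \<Rightarrow> 'b) \<Rightarrow> real" where
  "Hfun X f a b v1 v2 y = Min ((\<lambda>x. birkhoff_sum f a b x y) ` {x\<in>X. x a = v1 \<and> x b = v2})"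

definition sup_norm ::
  "(int \<Rightarrow> 'a) set \<Rightarrow> (int \<Rightarrow> 'b) set \<Rightarrow> ((int \<Rightarrow> 'a) \<Rightarrow> (int \<Rightarrow> 'b) \<Rightarrow> real) \<Rightarrow> real" where
  "sup_norm X Y f = (SUP p\<in>X \<times> Y. \<bar>f (fst p) (snd p)\<bar>)"

end

theory Submission
  imports Defs
begin

lemma sft_shift:
  assumes "is_1step_sft X" "x \<in> X"
  shows "shift_pow n x \<in> X"
proof -
  obtain Fb where Fb: "X = {x. \<forall>j. (x j, x (j + 1)) \<notin> Fb}"
    using assms(1) unfolding is_1step_sft_def by blast
  have h: "(x (j + n), x (j + n + 1)) \<notin> Fb" for j
    using assms(2) Fb by blast
  have h2: "(x (j + n), x (j + 1 + n)) \<notin> Fb" for j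
  proof -
    have e: "j + 1 + n = j + n + 1" by simp
    show ?thesis unfolding e by (rule h)
  qed
  have "shift_pow n x \<in> {x. \<forall>j. (x j, x (j + 1)) \<notin> Fb}"
    unfolding shift_pow_def using h2 by simp
  then show ?thesis using Fb by simp
qed

lemma sft_ne: "is_1step_sft X \<Longrightarrow> X \<noteq> {}"
  unfolding is_1step_sft_def is_shift_def by blast

lemma bs_eq:
  "birkhoff_sum (\<lambda>x y. F (x 0) (y 0)) a b x y = (\<Sum>j\<in>{a..b}. F (x j) (y j))"
  unfolding birkhoff_sum_def shift_pow_def by simp

lemma fin_img:
  fixes F :: "'a::finite \<Rightarrow> 'b \<Rightarrow> real" and A :: "(int \<Rightarrow> 'a) set"
  shows "finite ((\<lambda>x. \<Sum>j\<in>{a..b}. F (x j) (y j)) ` A)"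
proof -
  have "(\<lambda>x. \<Sum>j\<in>{a..b}. F (x j) (y j)) ` A \<subseteq>
        (\<lambda>g. \<Sum>j\<in>{a..b}. F (g j) (y j)) ` ({a..b} \<rightarrow>\<^sub>E (UNIV::'a set))"
  proof
    fix t assume "t \<in> (\<lambda>x. \<Sum>j\<in>{a..b}. F (x j) (y j)) ` A"
    then obtain x where t: "t = (\<Sum>j\<in>{a..b}. F (x j) (y j))" by blast
    have "t = (\<Sum>j\<in>{a..b}. F (restrict x {a..b} j) (y j))"
      unfolding t by (rule sum.cong) auto
    moreover have "restrict x {a..b} \<in> {a..b} \<rightarrow>\<^sub>E (UNIV::'a set)" by auto
    ultimately show "t \<in> (\<lambda>g. \<Sum>j\<in>{a..b}. F (g j) (y j)) ` ({a..b} \<rightarrow>\<^sub>E (UNIV::'a set))"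
      by blast
  qed
  moreover have "finite ({a..b} \<rightarrow>\<^sub>E (UNIV::'a::finite set))"
    by (rule finite_PiE) auto
  ultimately show ?thesis by (meson finite_imageI finite_subset)
qed

theorem lemma3p8:
  fixes X :: "(int \<Rightarrow> 'a::finite) set"
  assumes "is_1step_sft X" and "transitive_shift X"
  shows "\<exists>D::nat. \<forall>(Y :: (int \<Rightarrow> 'a) set) (F :: 'a \<Rightarrow> 'a \<Rightarrow> real).
    is_1step_sft Y \<longrightarrow>
    (let f = (\<lambda>x y. F (x 0) (y 0)) in
     \<forall>a b :: int. a \<le> b \<longrightarrow> (\<forall>(v1, v2)\<in>Pset X a b. \<forall>y0\<in>Y.
       Min ((\<lambda>x. birkhoff_sum f a b x y0) ` X) \<le> Hfun X f a b v1 v2 y0 \<and>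
       Hfun X f a b v1 v2 y0 \<le> Min ((\<lambda>x. birkhoff_sum f a b x y0) ` X) + 4 * real D * sup_norm X Y f))"
proof -
  obtain D :: nat where D: "\<And>x1 x2 b1 a2. x1 \<in> X \<Longrightarrow> x2 \<in> X \<Longrightarrow> a2 - b1 \<ge> int D \<Longrightarrow>
     (\<exists>x'\<in>X. (\<forall>j\<le>b1. x' j = x1 j) \<and> (\<forall>j\<ge>a2. x' j = x2 j))"
    using assms(2) unfolding transitive_shift_def by blast
  show ?thesis
  proof (intro exI[of _ D] allI impI)
    fix Y :: "(int \<Rightarrow> 'a) set" and F :: "'a \<Rightarrow> 'a \<Rightarrow> real"
    assume Y: "is_1step_sft Y"
    define f where "f = (\<lambda>(x::int\<Rightarrow>'a) (y::int\<Rightarrow>'a). F (x 0) (y 0))"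
    define M where "M = sup_norm X Y f"
    have Mbd: "\<bar>F (x j) (y j)\<bar> \<le> M" if "x \<in> X" "y \<in> Y" for x y j
    proof -
      have fin: "finite ((\<lambda>p. \<bar>f (fst p) (snd p)\<bar>) ` (X \<times> Y))"
        by (rule finite_subset[of _ "range (\<lambda>(u,v). \<bar>F u v\<bar>)"]) (auto simp: f_def)
      have "(shift_pow j x, shift_pow j y) \<in> X \<times> Y"
        using sft_shift[OF assms(1) that(1)] sft_shift[OF Y that(2)] by auto
      from cSUP_upper[OF this bdd_above_finite[OF fin]]
      show ?thesis unfolding M_def sup_norm_def f_def shift_pow_def by simp
    qed
    have main: "Min ((\<lambda>x. birkhoff_sum f a b x y0) ` X) \<le> Hfun X f a b v1 v2 y0 \<and>
            Hfun X f a b v1 v2 y0 \<le> Min ((\<lambda>x. birkhoff_sum f a b x y0) ` X) + 4 * real D * M"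
      if ab: "a \<le> b" and p: "(v1, v2) \<in> Pset X a b" and y0: "y0 \<in> Y" for a b v1 v2 y0
    proof -
      define pp where "pp = (v1, v2)"
      have pv: "pp = (v1, v2)" by (simp add: pp_def)
      have p: "pp \<in> Pset X a b" using p pp_def by simp
      obtain z where z: "z \<in> X" "z a = v1" "z b = v2" using p unfolding pv Pset_def by auto
      let ?g = "\<lambda>x. \<Sum>j\<in>{a..b}. F (x j) (y0 j)"
      have bsf: "birkhoff_sum f a b x y0 = ?g x" for x unfolding f_def by (rule bs_eq)
      have M0: "0 \<le> M" using Mbd[OF z(1) y0, of 0] by (meson abs_ge_zero order_trans)
      let ?S = "{x\<in>X. x a = v1 \<and> x b = v2}"
      have finX: "finite (?g ` X)" by (rule fin_img)
      have finS: "finite (?g ` ?S)" by (rule fin_img)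
      have neX: "?g ` X \<noteq> {}" using z by auto
      have neS: "?g ` ?S \<noteq> {}" using z by auto
      have H: "Hfun X f a b v1 v2 y0 = Min (?g ` ?S)"
        unfolding Hfun_def bsf by simp
      have imX: "(\<lambda>x. birkhoff_sum f a b x y0) ` X = ?g ` X" unfolding bsf by simp
      obtain xs where xs: "xs \<in> X" "?g xs = Min (?g ` X)"
        using Min_in[OF finX neX] by auto
      have lower: "Min (?g ` X) \<le> Min (?g ` ?S)"
        using finX finS neS by (intro Min_antimono) auto
      obtain w where w: "w \<in> X" "w a = v1" "w b = v2"
        and wS: "{j\<in>{a..b}. w j \<noteq> xs j} \<subseteq> {a..<a + int D} \<union> {b - int D<..b}"
      proof (cases "a + int D \<le> b - int D")
        case True
        obtain x1 where x1: "x1 \<in> X" "\<forall>j\<le>a. x1 j = z j" "\<forall>j\<ge>a + int D. x1 j = xs j"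
        proof -
          have "\<exists>x'\<in>X. (\<forall>j\<le>a. x' j = z j) \<and> (\<forall>j\<ge>a + int D. x' j = xs j)"
            by (rule D[OF z(1) xs(1)]) simp
          then show ?thesis using that by blast
        qed
        obtain x2 where x2: "x2 \<in> X" "\<forall>j\<le>b - int D. x2 j = x1 j" "\<forall>j\<ge>b. x2 j = z j"
        proof -
          have "\<exists>x'\<in>X. (\<forall>j\<le>b - int D. x' j = x1 j) \<and> (\<forall>j\<ge>b. x' j = z j)"
            by (rule D[OF x1(1) z(1)]) simp
          then show ?thesis using that by blast
        qed
        show ?thesis
        proof (rule that[of x2])
          show "x2 a = v1" using x2(2) x1(2) z(2) True by auto
          show "x2 b = v2" using x2(3) z(3) by auto
          show "{j\<in>{a..b}. x2 j \<noteq> xs j} \<subseteq> {a..<a + int D} \<union> {b - int D<..b}"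
          proof
            fix j assume j: "j \<in> {j\<in>{a..b}. x2 j \<noteq> xs j}"
            show "j \<in> {a..<a + int D} \<union> {b - int D<..b}"
            proof (rule ccontr)
              assume "j \<notin> {a..<a + int D} \<union> {b - int D<..b}"
              then have "a + int D \<le> j" "j \<le> b - int D" using j by auto
              then have "x2 j = xs j" using x2(2) x1(3) by auto
              then show False using j by auto
            qed
          qed
        qed (use x2 in auto)
      next
        case False
        show ?thesis
        proof (rule that[OF z])
          show "{j\<in>{a..b}. z j \<noteq> xs j} \<subseteq> {a..<a + int D} \<union> {b - int D<..b}"
            using False by auto
        qed
      qed
      have wle: "Min (?g ` ?S) \<le> ?g w" using finS w by (intro Min_le) auto
      let ?B = "{a..<a + int D} \<union> {b - int D<..b}"
      have "?g w - ?g xs = (\<Sum>j\<in>{a..b}. F (w j) (y0 j) - F (xs j) (y0 j))"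
        by (simp add: sum_subtractf)
      also have "\<dots> \<le> (\<Sum>j\<in>{a..b}. (if j \<in> ?B then 2 * M else 0))"
      proof (rule sum_mono)
        fix j assume j: "j \<in> {a..b}"
        show "F (w j) (y0 j) - F (xs j) (y0 j) \<le> (if j \<in> ?B then 2 * M else 0)"
        proof (cases "w j = xs j")
          case True then show ?thesis using M0 by simp
        next
          case False
          then have "j \<in> ?B" using wS j by blast
          then show ?thesis using Mbd[OF w(1) y0, of j] Mbd[OF xs(1) y0, of j] by auto
        qed
      qed
      also have "\<dots> = 2 * M * real (card ({a..b} \<inter> ?B))"
        by (subst sum.inter_restrict[symmetric]) auto
      also have "\<dots> \<le> 2 * M * real (card ?B)"
        using M0 by (intro mult_left_mono) (auto intro!: card_mono)
      also have "\<dots> \<le> 2 * M * real (2 * D)"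
      proof -
        have "card ?B \<le> card {a..<a + int D} + card {b - int D<..b}" by (rule card_Un_le)
        also have "\<dots> = 2 * D" by simp
        finally show ?thesis using M0 by (intro mult_left_mono) auto
      qed
      also have "\<dots> = 4 * real D * M" by simp
      finally have up: "?g w \<le> ?g xs + 4 * real D * M" by simp
      show ?thesis
        unfolding imX H using lower wle up xs(2) by linarith
    qed
    show "let f = (\<lambda>x y. F (x 0) (y 0)) in
     \<forall>a b :: int. a \<le> b \<longrightarrow> (\<forall>(v1, v2)\<in>Pset X a b. \<forall>y0\<in>Y.
       Min ((\<lambda>x. birkhoff_sum f a b x y0) ` X) \<le> Hfun X f a b v1 v2 y0 \<and>
       Hfun X f a b v1 v2 y0 \<le> Min ((\<lambda>x. birkhoff_sum f a b x y0) ` X) + 4 * real D * sup_norm X Y f)"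
      unfolding Let_def f_def[symmetric] M_def[symmetric] using main by blast
  qed
qed

end
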